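(* Let $q$ be a prime power, let $b,n\in\mathbb{N}$ with $b<n$, and let $\mathcal S_q=\{\mathbf x\in\mathbb F_q^n:\mathrm{wt}(\mathbf x)\le b\}$. Let $\delta\in(0,(1-q^{-1})/2)$ and $m,m',m'',s\in\mathbb{N}$ with $m>m'\ge m''s$ and $\delta m\in\mathbb N$, and let $\mathcal N(\delta)=\{\mathbf w\in\mathbb F_q^m:\mathrm{wt}(\mathbf w)\le\delta m\}$. Fix a primitive polynomial of degree $s$ over $\mathbb F_q$ with root $\alpha\in\mathbb F_{q^s}$ and the associated map $\phi_s:\mathbb F_q^{m''s\times n}\to\mathbb F_{q^s}^{m''\times n}$. Suppose $\mathbf A=\mathbf G\mathbf A'$, where $\mathbf G\in\mathbb F_q^{m\times m'}$ is a generator matrix of an $[m,m',d]_q$ linear code with $d>2\delta m$, and $\mathbf A'\in\mathbb F_q^{m'\times n}$ is such that some set of $m''s$ rows of $\mathbf A'$ forms a matrix $\mathbf A''$ for which $\phi_s(\mathbf A'')$ is a parity check matrix of an $[n,n-m'',d']_{q^s}$ linear code with $d'>2b$. Then $\mathbf x$ can be exactly recovered from $\mathbf y=\mathbf A\mathbf x+\mathbf w$: there is a map $D:\mathbb F_q^m\to\mathbb F_q^n$ with $D(\mathbf A\mathbf x+\mathbf w)=\mathbf x$ for all $\mathbf x\in\mathcal S_q$ and all $\mathbf w\in\mathcal N(\delta)$.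
   Context: $\mathbb F_q$ is the finite field with $q$ elements; $\mathrm{wt}(\mathbf x)$ is the number of nonzero entries of $\mathbf x$. A primitive polynomial of degree $s$ over $\mathbb F_q$ is a monic irreducible polynomial of degree $s$ having a primitive element $\alpha$ of $\mathbb F_{q^s}$ as a root. For $M=M's$ and $\mathbf C=[c_{ij}]\in\mathbb F_q^{M\times n}$, $\phi_s(\mathbf C)=[c'_{kl}]\in\mathbb F_{q^s}^{M'\times n}$ with $c'_{kl}=\sum_{t=0}^{s-1}c_{(k-1)s+t+1,\,l}\,\alpha^t$. An $[N,K,D]_Q$ linear code is a $K$-dimensional subspace of $\mathbb F_Q^N$ with minimum Hamming distance $D$; a generator matrix is an $N\times K$ matrix of rank $K$ whose column space is the code; a parity check matrix is an $(N-K)\times N$ matrix of rank $N-K$ whose null space is the code. *)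

theory Defs
  imports Main "HOL-Computational_Algebra.Polynomial" "HOL-Library.Function_Algebras" "HOL-Library.Cardinality"
begin

(* Vectors of length N over a field 'a are functions nat => 'a vanishing outside {0..<N};
   matrices are functions nat => nat => 'a (entries outside the index range are ignored).
   Indices are 0-based. *)

definition smult_v :: "'a::field \<Rightarrow> (nat \<Rightarrow> 'a) \<Rightarrow> (nat \<Rightarrow> 'a)" where
  "smult_v c v = (\<lambda>i. c * v i)"

definition vecs :: "nat \<Rightarrow> (nat \<Rightarrow> 'a::zero) set" where
  "vecs N = {x. \<forall>i\<ge>N. x i = 0}"

definition wt :: "nat \<Rightarrow> (nat \<Rightarrow> 'a::zero) \<Rightarrow> nat" where
  "wt N x = card {i. i < N \<and> x i \<noteq> 0}"

definition mat_vec :: "nat \<Rightarrow> nat \<Rightarrow> (nat \<Rightarrow> nat \<Rightarrow> 'a::comm_ring_1) \<Rightarrow> (nat \<Rightarrow> 'a) \<Rightarrow> (nat \<Rightarrow> 'a)" where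
  "mat_vec M K A x = (\<lambda>i. if i < M then (\<Sum>j<K. A i j * x j) else 0)"

definition mat_mult :: "nat \<Rightarrow> (nat \<Rightarrow> nat \<Rightarrow> 'a::comm_ring_1) \<Rightarrow> (nat \<Rightarrow> nat \<Rightarrow> 'a) \<Rightarrow> (nat \<Rightarrow> nat \<Rightarrow> 'a)" where
  "mat_mult K A B = (\<lambda>i j. \<Sum>k<K. A i k * B k j)"

definition col_space :: "nat \<Rightarrow> nat \<Rightarrow> (nat \<Rightarrow> nat \<Rightarrow> 'a::field) \<Rightarrow> (nat \<Rightarrow> 'a) set" where
  "col_space M K A = mat_vec M K A ` vecs K"

definition null_space :: "nat \<Rightarrow> nat \<Rightarrow> (nat \<Rightarrow> nat \<Rightarrow> 'a::field) \<Rightarrow> (nat \<Rightarrow> 'a) set" where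
  "null_space M K A = {x \<in> vecs K. mat_vec M K A x = (\<lambda>_. 0)}"

definition mat_rank :: "nat \<Rightarrow> nat \<Rightarrow> (nat \<Rightarrow> nat \<Rightarrow> 'a::field) \<Rightarrow> nat" where
  "mat_rank M K A = vector_space.dim smult_v (col_space M K A)"

definition lin_code :: "nat \<Rightarrow> nat \<Rightarrow> (nat \<Rightarrow> 'a::field) set \<Rightarrow> bool" where
  "lin_code N K C \<longleftrightarrow> C \<subseteq> vecs N \<and> module.subspace smult_v C \<and> vector_space.dim smult_v C = K"

definition min_dist :: "nat \<Rightarrow> (nat \<Rightarrow> 'a::field) set \<Rightarrow> nat" where
  "min_dist N C = Inf {wt N (x - y) | x y. x \<in> C \<and> y \<in> C \<and> x \<noteq> y}"

definition is_code :: "nat \<Rightarrow> nat \<Rightarrow> nat \<Rightarrow> (nat \<Rightarrow> 'a::field) set \<Rightarrow> bool" where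
  "is_code N K D C \<longleftrightarrow> lin_code N K C \<and> min_dist N C = D"

definition generator_matrix :: "nat \<Rightarrow> nat \<Rightarrow> (nat \<Rightarrow> nat \<Rightarrow> 'a::field) \<Rightarrow> (nat \<Rightarrow> 'a) set \<Rightarrow> bool" where
  "generator_matrix N K G C \<longleftrightarrow> mat_rank N K G = K \<and> col_space N K G = C"

definition parity_check_matrix :: "nat \<Rightarrow> nat \<Rightarrow> (nat \<Rightarrow> nat \<Rightarrow> 'a::field) \<Rightarrow> (nat \<Rightarrow> 'a) set \<Rightarrow> bool" where
  "parity_check_matrix N K H C \<longleftrightarrow> mat_rank (N - K) N H = N - K \<and> null_space (N - K) N H = C"

definition field_embedding :: "('a::field \<Rightarrow> 'b::field) \<Rightarrow> bool" where
  "field_embedding emb \<longleftrightarrow> inj emb \<and> emb 0 = 0 \<and> emb 1 = 1 \<and>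
     (\<forall>x y. emb (x + y) = emb x + emb y) \<and> (\<forall>x y. emb (x * y) = emb x * emb y)"

definition primitive_element :: "'b::field \<Rightarrow> bool" where
  "primitive_element \<alpha> \<longleftrightarrow> \<alpha> \<noteq> 0 \<and> (\<forall>y. y \<noteq> 0 \<longrightarrow> (\<exists>k::nat. \<alpha> ^ k = y))"

definition primitive_poly :: "('a::field \<Rightarrow> 'b::field) \<Rightarrow> nat \<Rightarrow> 'a poly \<Rightarrow> 'b \<Rightarrow> bool" where
  "primitive_poly emb s p \<alpha> \<longleftrightarrow> lead_coeff p = 1 \<and> irreducible p \<and> degree p = s \<and>
     primitive_element \<alpha> \<and> poly (map_poly emb p) \<alpha> = 0"

(* \<phi>_s : F_q^{M's x n} \<rightarrow> F_{q^s}^{M' x n}, 0-based:  c'_{k,l} = \<Sum>_{t<s} c_{k s + t, l} \<alpha>^t *)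
definition phi :: "('a \<Rightarrow> 'b::field) \<Rightarrow> 'b \<Rightarrow> nat \<Rightarrow> (nat \<Rightarrow> nat \<Rightarrow> 'a) \<Rightarrow> (nat \<Rightarrow> nat \<Rightarrow> 'b)" where
  "phi emb \<alpha> s C = (\<lambda>k l. \<Sum>t<s. emb (C (k * s + t) l) * \<alpha> ^ t)"

end

theory Submission imports Defs begin

interpretation vs: vector_space "smult_v :: 'a::field \<Rightarrow> (nat \<Rightarrow> 'a) \<Rightarrow> _"
  by unfold_locales (auto simp: smult_v_def fun_eq_iff algebra_simps)

lemma sum_app: "(sum f A) (x::'c) = (\<Sum>a\<in>A. f a x)"
  by (induct A rule: infinite_finite_induct) auto

lemma mat_vec_cols:
  "mat_vec m k G u = (\<Sum>j<k. smult_v (u j) (\<lambda>i. if i < m then G i j else 0))"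
  by (auto simp: mat_vec_def smult_v_def fun_eq_iff sum_app mult.commute intro!: sum.cong)

lemma gen_inj:
  fixes G :: "nat \<Rightarrow> nat \<Rightarrow> 'a::field"
  assumes rk: "mat_rank m k G = k" and u: "u \<in> vecs k" and z: "mat_vec m k G u = 0"
  shows "u = 0"
proof -
  define col where "col j = (\<lambda>i. if i < m then G i j else (0::'a))" for j
  define B where "B = col ` {..<k}"
  have fB: "finite B" by (simp add: B_def)
  have cs: "col_space m k G \<subseteq> vs.span B"
    unfolding col_space_def
  proof
    fix y assume "y \<in> mat_vec m k G ` vecs k"
    then obtain v where "y = mat_vec m k G v" by auto
    then have "y = (\<Sum>j<k. smult_v (v j) (col j))" by (simp add: mat_vec_cols col_def)
    then show "y \<in> vs.span B"
      by (simp, intro vs.span_sum vs.span_scale vs.span_base) (auto simp: B_def)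
  qed
  have Bc: "B \<subseteq> col_space m k G"
  proof
    fix y assume "y \<in> B"
    then obtain j where j: "j < k" "y = col j" by (auto simp: B_def)
    define e where "e = (\<lambda>i. if i = j then (1::'a) else 0)"
    have "e \<in> vecs k" using j by (auto simp: e_def vecs_def)
    moreover have "mat_vec m k G e = y"
      using j by (auto simp: mat_vec_def e_def col_def fun_eq_iff if_distrib cong: if_cong)
    ultimately show "y \<in> col_space m k G" unfolding col_space_def by force
  qed
  have dle: "vs.dim (col_space m k G) \<le> card B" by (rule vs.dim_le_card[OF cs fB])
  have cB: "card B \<le> k" unfolding B_def using card_image_le by fastforce
  with dle rk have cardB: "card B = k" by (simp add: mat_rank_def)
  have inj: "inj_on col {..<k}"
    using cardB unfolding B_def by (metis card_lessThan eq_card_imp_inj_on finite_lessThan)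
  have ind: "vs.independent B"
  proof -
    obtain A where A: "A \<subseteq> B" "vs.independent A" "B \<subseteq> vs.span A"
      using vs.maximal_independent_subset[of B] by blast
    have "col_space m k G \<subseteq> vs.span A"
      using cs A(3) vs.span_mono[OF A(3)] vs.span_span by blast
    then have "card A = vs.dim (col_space m k G)"
      using vs.basis_card_eq_dim[of A "col_space m k G"] A Bc by blast
    then have "card A = card B" using rk cardB by (simp add: mat_rank_def)
    then have "A = B" using A(1) fB card_subset_eq by blast
    with A show ?thesis by simp
  qed
  define c where "c v = u (the_inv_into {..<k} col v)" for v
  have "(\<Sum>v\<in>B. smult_v (c v) v) = (\<Sum>j<k. smult_v (c (col j)) (col j))"
    unfolding B_def by (rule sum.reindex[OF inj, unfolded comp_def])
  also have "\<dots> = (\<Sum>j<k. smult_v (u j) (col j))"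
    using inj by (auto simp: c_def the_inv_into_f_f intro!: sum.cong)
  also have "\<dots> = 0" using z by (simp add: mat_vec_cols col_def)
  finally have "\<forall>v\<in>B. c v = 0" using ind vs.dependent_finite[OF fB] by blast
  then have "\<forall>j<k. u j = 0" using inj by (auto simp: B_def c_def the_inv_into_f_f)
  with u show ?thesis unfolding vecs_def by (auto simp: fun_eq_iff) (metis leI)
qed

lemma mat_vec_diff: "mat_vec M K A (x - y) = mat_vec M K A x - mat_vec M K A y"
  by (auto simp: mat_vec_def fun_eq_iff sum_subtractf right_diff_distrib)

lemma mat_vec_vecs: "mat_vec M K A x \<in> vecs M"
  by (simp add: mat_vec_def vecs_def)

lemma mat_vec_mult: "mat_vec m n (mat_mult k G A) x = mat_vec m k G (mat_vec k n A x)"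
proof -
  have "(\<Sum>j<n. (\<Sum>l<k. G i l * A l j) * x j) = (\<Sum>l<k. G i l * (\<Sum>j<n. A l j * x j))" for i
    by (simp add: sum_distrib_left sum_distrib_right mult.assoc sum.swap[of _ "{..<n}"])
  then show ?thesis by (auto simp: mat_vec_def mat_mult_def fun_eq_iff)
qed

lemma wt_diff_le: "wt N (a - c) \<le> wt N a + wt N (c :: nat \<Rightarrow> 'a::ab_group_add)"
proof -
  have "{i. i < N \<and> (a - c) i \<noteq> 0} \<subseteq> {i. i < N \<and> a i \<noteq> 0} \<union> {i. i < N \<and> c i \<noteq> 0}" by auto
  then have "wt N (a - c) \<le> card ({i. i < N \<and> a i \<noteq> 0} \<union> {i. i < N \<and> c i \<noteq> 0})"
    unfolding wt_def by (intro card_mono) auto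
  also have "\<dots> \<le> wt N a + wt N c" unfolding wt_def by (rule card_Un_le)
  finally show ?thesis .
qed

lemma min_dist_le: "x \<in> C \<Longrightarrow> y \<in> C \<Longrightarrow> x \<noteq> y \<Longrightarrow> min_dist N C \<le> wt N (x - y)"
  unfolding min_dist_def by (rule cInf_lower) auto

lemma emb_sum: "field_embedding emb \<Longrightarrow> emb (sum f A) = (\<Sum>a\<in>A. emb (f a))"
  by (induct A rule: infinite_finite_induct) (auto simp: field_embedding_def)

lemma wt_emb: "field_embedding emb \<Longrightarrow> wt N (\<lambda>l. emb (z l)) = wt N z"
  unfolding wt_def field_embedding_def by (metis injD)

theorem theorem3:
  fixes emb :: "'a::{finite,field} \<Rightarrow> 'b::{finite,field}"
    and p :: "'a poly" and \<alpha> :: 'b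
    and b n m m' m'' s :: nat and \<delta> :: real
    and G A' :: "nat \<Rightarrow> nat \<Rightarrow> 'a"
  assumes bn: "b < n"
    and delta_pos: "0 < \<delta>" and delta_lt: "\<delta> < (1 - 1 / real CARD('a)) / 2"
    and mm': "m > m'" and m'm'': "m' \<ge> m'' * s"
    and delta_nat: "\<delta> * real m \<in> \<nat>"
    and emb: "field_embedding emb" and card_b: "CARD('b) = CARD('a) ^ s"
    and prim: "primitive_poly emb s p \<alpha>"
    and G: "\<exists>C d. is_code m m' d C \<and> generator_matrix m m' G C \<and> real d > 2 * \<delta> * real m"
    and A'': "\<exists>r :: nat \<Rightarrow> nat. strict_mono_on {..<m'' * s} r \<and> (\<forall>i < m'' * s. r i < m') \<and>
               (\<exists>C' d'. is_code n (n - m'') d' C' \<and>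
                  parity_check_matrix n (n - m'') (phi emb \<alpha> s (\<lambda>k l. A' (r k) l)) C' \<and>
                  d' > 2 * b)"
  shows "\<exists>D :: (nat \<Rightarrow> 'a) \<Rightarrow> (nat \<Rightarrow> 'a).
           \<forall>x \<in> {x \<in> vecs n. wt n x \<le> b}. \<forall>w \<in> {w \<in> vecs m. real (wt m w) \<le> \<delta> * real m}.
             D (mat_vec m n (mat_mult m' G A') x + w) = x"
proof -
  define A where "A = mat_mult m' G A'"
  define S :: "(nat \<Rightarrow> 'a) set" where "S = {x \<in> vecs n. wt n x \<le> b}"
  define NN :: "(nat \<Rightarrow> 'a) set" where "NN = {w \<in> vecs m. real (wt m w) \<le> \<delta> * real m}"
  obtain C d where C: "is_code m m' d C" "generator_matrix m m' G C" "real d > 2 * \<delta> * real m"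
    using G by blast
  obtain r C' d' where r: "\<forall>i < m'' * s. r i < m'"
    and C': "is_code n (n - m'') d' C'"
      "parity_check_matrix n (n - m'') (phi emb \<alpha> s (\<lambda>k l. A' (r k) l)) C'" "d' > 2 * b"
    using A'' by blast
  have key: "x = x'" if xs: "x \<in> S" "x' \<in> S" and ws: "w \<in> NN" "w' \<in> NN"
    and eq: "mat_vec m n A x + w = mat_vec m n A x' + w'" for x x' w w' :: "nat \<Rightarrow> 'a"
  proof -
    define z where "z = x - x'"
    define u where "u = mat_vec m' n A' z"
    have zv: "z \<in> vecs n" using xs by (auto simp: S_def vecs_def z_def)
    have wz: "wt n z \<le> 2 * b" using xs wt_diff_le[of n x x'] by (auto simp: S_def z_def)
    have v: "mat_vec m m' G u = w' - w"
    proof -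
      have "mat_vec m m' G u = mat_vec m n A z" by (simp add: u_def A_def mat_vec_mult)
      also have "\<dots> = mat_vec m n A x - mat_vec m n A x'" by (simp add: z_def mat_vec_diff)
      also have "\<dots> = w' - w" using eq by (simp add: algebra_simps)
      finally show ?thesis .
    qed
    have Cc: "C = col_space m m' G" using C(2) by (simp add: generator_matrix_def)
    have uC: "mat_vec m m' G u \<in> C" unfolding Cc col_space_def u_def
      by (rule imageI) (rule mat_vec_vecs)
    have z0: "(0 :: nat \<Rightarrow> 'a) \<in> vecs m'" by (simp add: vecs_def)
    have "mat_vec m m' G 0 = 0" by (simp add: mat_vec_def fun_eq_iff)
    then have zC: "0 \<in> C" unfolding Cc col_space_def using z0 by (metis imageI)
    have dC: "min_dist m C = d" using C(1) by (simp add: is_code_def)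
    have "mat_vec m m' G u = 0"
    proof (rule ccontr)
      assume ne: "mat_vec m m' G u \<noteq> 0"
      have "d \<le> wt m (w' - w)" using min_dist_le[OF uC zC ne, of m] dC v by simp
      also have "\<dots> \<le> wt m w' + wt m w" by (rule wt_diff_le)
      finally have "real d \<le> real (wt m w') + real (wt m w)" by linarith
      with ws C(3) show False by (simp add: NN_def)
    qed
    then have u0: "u = 0" using gen_inj[of m m' G u] C(2)
      by (simp add: generator_matrix_def u_def mat_vec_vecs)
    define H where "H = phi emb \<alpha> s (\<lambda>k l. A' (r k) l)"
    define ze where "ze = (\<lambda>l. emb (z l))"
    have embf: "emb 0 = 0" "inj emb" using emb by (auto simp: field_embedding_def)
    have zev: "ze \<in> vecs n" using zv embf by (simp add: vecs_def ze_def)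
    have Hz: "mat_vec (n - (n - m'')) n H ze = 0"
    proof -
      have "(\<Sum>l<n. H k l * ze l) = 0" if k: "k < m''" for k
      proof -
        have "(\<Sum>l<n. H k l * ze l) = (\<Sum>l<n. \<Sum>t<s. emb (A' (r (k * s + t)) l * z l) * \<alpha> ^ t)"
          using emb by (simp add: H_def phi_def ze_def sum_distrib_right sum_distrib_left field_embedding_def
              mult_ac)
        also have "\<dots> = (\<Sum>t<s. emb (\<Sum>l<n. A' (r (k * s + t)) l * z l) * \<alpha> ^ t)"
          by (simp add: sum.swap[of _ "{..<n}"] emb_sum[OF emb] sum_distrib_right)
        also have "\<dots> = 0"
        proof (rule sum.neutral, intro ballI)
          fix t assume t: "t \<in> {..<s}"
          have "k * s + t < m'' * s"
          proof -
            have "k * s + t < k * s + s" using t by simp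
            also have "\<dots> = Suc k * s" by simp
            also have "\<dots> \<le> m'' * s" using k by (intro mult_right_mono) auto
            finally show ?thesis .
          qed
          then have "r (k * s + t) < m'" using r by blast
          then have "(\<Sum>l<n. A' (r (k * s + t)) l * z l) = u (r (k * s + t))"
            by (simp add: u_def mat_vec_def)
          then show "emb (\<Sum>l<n. A' (r (k * s + t)) l * z l) * \<alpha> ^ t = 0"
            using u0 embf by simp
        qed
        finally show ?thesis .
      qed
      then show ?thesis by (auto simp: mat_vec_def fun_eq_iff)
    qed
    have C'c: "C' = null_space (n - (n - m'')) n H"
      using C'(2) by (simp add: parity_check_matrix_def H_def)
    have zeC: "ze \<in> C'" unfolding C'c null_space_def using zev Hz by (simp add: zero_fun_def)
    have zC': "(0 :: nat \<Rightarrow> 'b) \<in> C'" unfolding C'c null_space_def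
      by (simp add: vecs_def mat_vec_def fun_eq_iff)
    have dC': "min_dist n C' = d'" using C'(1) by (simp add: is_code_def)
    have "ze = 0"
    proof (rule ccontr)
      assume ne: "ze \<noteq> 0"
      have "d' \<le> wt n ze" using min_dist_le[OF zeC zC' ne, of n] dC' by simp
      also have "\<dots> = wt n z" unfolding ze_def by (rule wt_emb[OF emb])
      finally show False using wz C'(3) by simp
    qed
    then have "\<forall>l. z l = 0" using embf unfolding ze_def fun_eq_iff
      by (metis injD zero_fun_def)
    then show "x = x'" by (auto simp: z_def fun_eq_iff)
  qed
  define D where "D y = (SOME x. x \<in> S \<and> (\<exists>w\<in>NN. y = mat_vec m n A x + w))" for y
  have "\<forall>x\<in>S. \<forall>w\<in>NN. D (mat_vec m n A x + w) = x"
  proof (intro ballI)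
    fix x w assume xw: "x \<in> S" "w \<in> NN"
    have "D (mat_vec m n A x + w) \<in> S \<and> (\<exists>w'\<in>NN. mat_vec m n A x + w = mat_vec m n A (D (mat_vec m n A x + w)) + w')"
      unfolding D_def by (rule someI[of _ x]) (use xw in blast)
    then show "D (mat_vec m n A x + w) = x" using key xw by metis
  qed
  then show ?thesis unfolding S_def NN_def A_def by blast
qed

end
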